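(* Let $X$ be a locally compact, Hausdorff, second countable space and $(Y,d)$ a metric space. Then the topologies $\tau_{co}$ and $\tau_{cc}$ coincide on $C_{od}(X,Y)$.
   Context: $C_{od}(X,Y)$ is the set of continuous functions $f:\mathrm{dom}(f)\to Y$ whose domain is an open subset of $X$ (including the empty function), and $C_{od}^\star(X,Y)=C_{od}(X,Y)\setminus\{\emptyset\}$. The topology $\tau_{co}$ on $C_{od}(X,Y)$ is generated by the subbasic sets $\langle K,V\rangle=\{f: K\subseteq\mathrm{dom}(f),\ f(K)\subseteq V\}$, $K\subseteq X$ compact, $V\subseteq Y$ open. For a nonempty compact $K\subseteq\mathrm{dom}(f)\cap\mathrm{dom}(g)$, $d_K(f,g)=\sup_{x\in K}d(f(x),g(x))$; for $f\in C_{od}^\star(X,Y)$, nonempty compact $K\subseteq\mathrm{dom}(f)$ and $\epsilon>0$, $B_K(f,\epsilon)=\{g\in C_{od}^\star(X,Y): K\subseteq\mathrm{dom}(g),\ d_K(f,g)<\epsilon\}$. The topology of compact convergence $\tau_{cc}$ is the topology having as basis all sets $B_K(f,\epsilon)$ together with $C_{od}(X,Y)$. *)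

theory Defs
  imports "HOL-Analysis.Analysis"
begin

text \<open>Partial functions X -> Y are modelled as maps 'a => 'b option; dom f is the domain.
  Y is the metric space (M,d), with topology mtopology.\<close>

definition Cod :: "'a topology \<Rightarrow> 'b set \<Rightarrow> ('b \<Rightarrow> 'b \<Rightarrow> real) \<Rightarrow> ('a \<Rightarrow> 'b option) set" where
  "Cod X M d = {f. openin X (dom f) \<and>
      continuous_map (subtopology X (dom f)) (Metric_space.mtopology M d) (\<lambda>x. the (f x))}"

definition Cod_star :: "'a topology \<Rightarrow> 'b set \<Rightarrow> ('b \<Rightarrow> 'b \<Rightarrow> real) \<Rightarrow> ('a \<Rightarrow> 'b option) set" where
  "Cod_star X M d = Cod X M d - {Map.empty}"

definition co_sub :: "'a topology \<Rightarrow> 'b set \<Rightarrow> ('b \<Rightarrow> 'b \<Rightarrow> real) \<Rightarrow> 'a set \<Rightarrow> 'b set \<Rightarrow> ('a \<Rightarrow> 'b option) set" where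
  "co_sub X M d K V = {f \<in> Cod X M d. K \<subseteq> dom f \<and> (\<forall>x\<in>K. the (f x) \<in> V)}"

definition tau_co :: "'a topology \<Rightarrow> 'b set \<Rightarrow> ('b \<Rightarrow> 'b \<Rightarrow> real) \<Rightarrow> ('a \<Rightarrow> 'b option) topology" where
  "tau_co X M d = topology_generated_by
     {co_sub X M d K V | K V. compactin X K \<and> openin (Metric_space.mtopology M d) V}"

definition dK :: "('b \<Rightarrow> 'b \<Rightarrow> real) \<Rightarrow> 'a set \<Rightarrow> ('a \<Rightarrow> 'b option) \<Rightarrow> ('a \<Rightarrow> 'b option) \<Rightarrow> real" where
  "dK d K f g = (SUP x\<in>K. d (the (f x)) (the (g x)))"

definition BK :: "'a topology \<Rightarrow> 'b set \<Rightarrow> ('b \<Rightarrow> 'b \<Rightarrow> real) \<Rightarrow> 'a set \<Rightarrow> ('a \<Rightarrow> 'b option) \<Rightarrow> real \<Rightarrow> ('a \<Rightarrow> 'b option) set" where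
  "BK X M d K f \<epsilon> = {g \<in> Cod_star X M d. K \<subseteq> dom g \<and> dK d K f g < \<epsilon>}"

definition tau_cc :: "'a topology \<Rightarrow> 'b set \<Rightarrow> ('b \<Rightarrow> 'b \<Rightarrow> real) \<Rightarrow> ('a \<Rightarrow> 'b option) topology" where
  "tau_cc X M d = topology_generated_by
     (insert (Cod X M d)
       {BK X M d K f \<epsilon> | K f \<epsilon>. f \<in> Cod_star X M d \<and> compactin X K \<and> K \<noteq> {} \<and>
                              K \<subseteq> dom f \<and> \<epsilon> > 0})"

end

theory Submission
  imports Defs
begin

context Metric_space
begin

lemma Cod_cont_K:
  assumes "f \<in> Cod X M d" "K \<subseteq> dom f"
  shows "continuous_map (subtopology X K) mtopology (\<lambda>x. the (f x))"
  using assms unfolding Cod_def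
  by (auto intro: continuous_map_from_subtopology_mono)

lemma Cod_in_M:
  assumes "f \<in> Cod X M d" "x \<in> dom f"
  shows "the (f x) \<in> M"
proof -
  have o: "openin X (dom f)" and c: "continuous_map (subtopology X (dom f)) mtopology (\<lambda>x. the (f x))"
    using assms unfolding Cod_def by auto
  have "x \<in> topspace (subtopology X (dom f))"
    using openin_subset[OF o] assms(2) by auto
  then show ?thesis using continuous_map_image_subset_topspace[OF c] by auto
qed

lemma Cod_img_compact:
  assumes "f \<in> Cod X M d" "K \<subseteq> dom f" "compactin X K"
  shows "compactin mtopology ((\<lambda>x. the (f x)) ` K)"
proof -
  have "compactin (subtopology X K) K" using assms(3) by (simp add: compactin_subtopology)
  then show ?thesis using image_compactin Cod_cont_K[OF assms(1,2)] by blast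
qed

lemma dK_bdd:
  assumes "f \<in> Cod X M d" "g \<in> Cod X M d" "compactin X K" "K \<subseteq> dom f" "K \<subseteq> dom g"
  shows "bdd_above ((\<lambda>x. d (the (f x)) (the (g x))) ` K)"
proof -
  obtain c B where cB: "(\<lambda>x. the (f x)) ` K \<subseteq> mcball c B"
    using compactin_imp_mbounded[OF Cod_img_compact[OF assms(1,4,3)]] unfolding mbounded_def by blast
  obtain c' B' where cB': "(\<lambda>x. the (g x)) ` K \<subseteq> mcball c' B'"
    using compactin_imp_mbounded[OF Cod_img_compact[OF assms(2,5,3)]] unfolding mbounded_def by blast
  show ?thesis unfolding bdd_above_def
  proof (intro exI ballI)
    fix y assume "y \<in> (\<lambda>x. d (the (f x)) (the (g x))) ` K"
    then obtain x where x: "x \<in> K" and y: "y = d (the (f x)) (the (g x))" by auto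
    have a: "the (f x) \<in> mcball c B" "the (g x) \<in> mcball c' B'" using x cB cB' by auto
    have "d (the (f x)) (the (g x)) \<le> d (the (f x)) c + d c (the (g x))"
      using a by (auto intro: triangle)
    also have "\<dots> \<le> d (the (f x)) c + (d c c' + d c' (the (g x)))"
      using a by (auto intro: triangle)
    also have "\<dots> \<le> B + d c c' + B'" using a by (auto simp: commute)
    finally show "y \<le> B + d c c' + B'" using y by simp
  qed
qed

lemma dK_ge:
  assumes "f \<in> Cod X M d" "g \<in> Cod X M d" "compactin X K" "K \<subseteq> dom f" "K \<subseteq> dom g" "x \<in> K"
  shows "d (the (f x)) (the (g x)) \<le> dK d K f g"
  unfolding dK_def using dK_bdd[OF assms(1-5)] assms(6) by (rule cSUP_upper2) auto

lemma compact_mball_uniform: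
  assumes "compactin mtopology C" "C \<subseteq> V" "openin mtopology V" "C \<noteq> {}"
  shows "\<exists>e>0. \<forall>y\<in>C. mball y e \<subseteq> V"
proof -
  have "\<forall>y\<in>C. \<exists>r>0. mball y (2*r) \<subseteq> V"
  proof
    fix y assume "y \<in> C"
    then obtain r where "r > 0" "mball y r \<subseteq> V" using assms(2,3) openin_mtopology by blast
    then show "\<exists>r>0. mball y (2*r) \<subseteq> V" by (intro exI[of _ "r/2"]) auto
  qed
  then obtain r where r: "\<And>y. y \<in> C \<Longrightarrow> r y > 0 \<and> mball y (2 * r y) \<subseteq> V" by metis
  have "C \<subseteq> \<Union>((\<lambda>y. mball y (r y)) ` C)" using r assms(1) compactin_subset_topspace by fastforce
  then obtain F where F: "finite F" "F \<subseteq> (\<lambda>y. mball y (r y)) ` C" "C \<subseteq> \<Union>F"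
    using compactinD[OF assms(1)] by (metis (no_types, lifting) imageE openin_mball)
  then obtain G where G: "G \<subseteq> C" "finite G" "F = (\<lambda>y. mball y (r y)) ` G"
    by (meson finite_subset_image)
  have Gne: "G \<noteq> {}" using G F assms(4) by auto
  define e where "e = Min (r ` G)"
  have epos: "e > 0" unfolding e_def using G Gne r by auto
  show ?thesis
  proof (rule exI[of _ e], intro conjI epos ballI)
    fix z assume z: "z \<in> C"
    then obtain y where y: "y \<in> G" "z \<in> mball y (r y)" using F G by auto
    have "e \<le> r y" unfolding e_def using G y by auto
    then have "mball z e \<subseteq> mball y (2 * r y)"
      using y by (intro mball_subset) (auto simp: commute)
    then show "mball z e \<subseteq> V" using r y G by blast
  qed
qed

lemma Cod_open_cc: "openin (tau_cc X M d) (Cod X M d)"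
  unfolding tau_cc_def by (rule topology_generated_by_Basis) simp

lemma co_sub_empty: "co_sub X M d {} V = Cod X M d"
  unfolding co_sub_def by auto

lemma Cod_open_co: "openin (tau_co X M d) (Cod X M d)"
proof -
  have "co_sub X M d {} {} \<in> {co_sub X M d K V | K V. compactin X K \<and> openin mtopology V}"
    by (rule CollectI, rule exI[of _ "{}"], rule exI[of _ "{}"]) simp
  then show ?thesis unfolding tau_co_def co_sub_empty by (rule topology_generated_by_Basis)
qed

lemma co_open_cc:
  assumes K: "compactin X K" and V: "openin mtopology V"
  shows "openin (tau_cc X M d) (co_sub X M d K V)"
proof (cases "K = {}")
  case True
  then show ?thesis by (simp only: co_sub_empty Cod_open_cc)
next
  case False
  show ?thesis
  proof (subst openin_subopen, intro ballI)
    fix f assume f: "f \<in> co_sub X M d K V"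
    then have fC: "f \<in> Cod X M d" and Kf: "K \<subseteq> dom f" and fV: "\<forall>x\<in>K. the (f x) \<in> V"
      unfolding co_sub_def by auto
    have fne: "f \<noteq> Map.empty" using Kf False by auto
    then have fCs: "f \<in> Cod_star X M d" using fC unfolding Cod_star_def by auto
    obtain e where e: "e > 0" "\<forall>y\<in>(\<lambda>x. the (f x)) ` K. mball y e \<subseteq> V"
      using compact_mball_uniform[OF Cod_img_compact[OF fC Kf K] _ V] fV False by blast
    have "BK X M d K f e \<in> {BK X M d K f \<epsilon> | K f \<epsilon>. f \<in> Cod_star X M d \<and> compactin X K \<and> K \<noteq> {} \<and>
                              K \<subseteq> dom f \<and> \<epsilon> > 0}"
      using fCs K False Kf e by (intro CollectI exI[of _ K] exI[of _ f] exI[of _ e]) simp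
    then have op: "openin (tau_cc X M d) (BK X M d K f e)"
      unfolding tau_cc_def by (intro topology_generated_by_Basis) blast
    have "dK d K f f = 0"
    proof -
      have "dK d K f f = (SUP x\<in>K. (0::real))"
        unfolding dK_def using Kf Cod_in_M[OF fC] by (intro SUP_cong) (auto simp: subset_iff)
      then show ?thesis using False by simp
    qed
    then have fin: "f \<in> BK X M d K f e" unfolding BK_def using fCs Kf e by auto
    have sub: "BK X M d K f e \<subseteq> co_sub X M d K V"
    proof
      fix g assume g: "g \<in> BK X M d K f e"
      then have gC: "g \<in> Cod X M d" and Kg: "K \<subseteq> dom g" and lt: "dK d K f g < e"
        unfolding BK_def Cod_star_def by auto
      have "the (g x) \<in> V" if x: "x \<in> K" for x
      proof -
        have "d (the (f x)) (the (g x)) < e" using dK_ge[OF fC gC K Kf Kg x] lt by linarith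
        moreover have "x \<in> dom f" "x \<in> dom g" using x Kf Kg by auto
        ultimately have "the (g x) \<in> mball (the (f x)) e"
          using Cod_in_M[OF fC] Cod_in_M[OF gC] by simp
        then show ?thesis using e x by blast
      qed
      then show "g \<in> co_sub X M d K V" unfolding co_sub_def using gC Kg by auto
    qed
    show "\<exists>T. openin (tau_cc X M d) T \<and> f \<in> T \<and> T \<subseteq> co_sub X M d K V"
      using op fin sub by blast
  qed
qed

lemma co_sub_open_co:
  assumes "compactin X K" "openin mtopology V"
  shows "openin (tau_co X M d) (co_sub X M d K V)"
  unfolding tau_co_def using assms by (intro topology_generated_by_Basis) blast

lemma cc_open_co:
  assumes fCs: "f \<in> Cod_star X M d" and K: "compactin X K" and Kne: "K \<noteq> {}"
    and Kf: "K \<subseteq> dom f" and ep: "\<epsilon> > 0"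
  shows "openin (tau_co X M d) (BK X M d K f \<epsilon>)"
proof (subst openin_subopen, intro ballI)
  have fC: "f \<in> Cod X M d" using fCs unfolding Cod_star_def by auto
  fix g assume g: "g \<in> BK X M d K f \<epsilon>"
  then have gC: "g \<in> Cod X M d" and Kg: "K \<subseteq> dom g" and lt: "dK d K f g < \<epsilon>"
    unfolding BK_def Cod_star_def by auto
  define \<delta> where "\<delta> = \<epsilon> - dK d K f g"
  have dpos: "\<delta> > 0" unfolding \<delta>_def using lt by simp
  define gg where "gg = (\<lambda>x. the (g x))"
  have gcont: "continuous_map (subtopology X K) mtopology gg"
    unfolding gg_def by (rule Cod_cont_K[OF gC Kg])
  have tsK: "topspace (subtopology X K) = K" using compactin_subset_topspace[OF K] by auto
  define U where "U = (\<lambda>y. {x \<in> topspace (subtopology X K). gg x \<in> mball (gg y) (\<delta>/4)})"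
  define C where "C = (\<lambda>y. {x \<in> topspace (subtopology X K). gg x \<in> mcball (gg y) (\<delta>/4)})"
  have Uo: "openin (subtopology X K) (U y)" for y
    unfolding U_def by (rule openin_continuous_map_preimage[OF gcont]) simp
  have gM: "gg x \<in> M" if "x \<in> K" for x unfolding gg_def using Cod_in_M[OF gC] that Kg by blast
  have Kcov: "K \<subseteq> \<Union>(U ` K)"
  proof
    fix x assume "x \<in> K" then show "x \<in> \<Union>(U ` K)" unfolding U_def using tsK gM dpos by (intro UN_I[of x]) auto
  qed
  have Kc: "compactin (subtopology X K) K" using K by (simp add: compactin_subtopology)
  obtain F where F: "finite F" "F \<subseteq> U ` K" "K \<subseteq> \<Union>F"
    using compactinD[OF Kc _ Kcov] Uo by blast
  then obtain G where G: "G \<subseteq> K" "finite G" "F = U ` G"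
    by (meson finite_subset_image)
  have Cc: "compactin X (C y)" for y
  proof -
    have "closedin (subtopology X K) (C y)"
      unfolding C_def by (rule closedin_continuous_map_preimage[OF gcont]) simp
    then have "compactin (subtopology X K) (C y)"
      using closedin_compact_space compact_space_subtopology[OF K] by blast
    then show ?thesis by (simp add: compactin_subtopology)
  qed
  have UC: "U y \<subseteq> C y" for y unfolding U_def C_def by auto
  have CK: "C y \<subseteq> K" for y unfolding C_def using tsK by auto
  define N where "N = Cod X M d \<inter> (\<Inter>y\<in>G. co_sub X M d (C y) (mball (gg y) (\<delta>/3)))"
  have Nop: "openin (tau_co X M d) N"
  proof -
    have "openin (tau_co X M d) ((\<Inter>y\<in>G. co_sub X M d (C y) (mball (gg y) (\<delta>/3))) \<inter> topspace (tau_co X M d))"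
      using G by (intro openin_INT co_sub_open_co Cc) auto
    then have "openin (tau_co X M d) (Cod X M d \<inter> ((\<Inter>y\<in>G. co_sub X M d (C y) (mball (gg y) (\<delta>/3))) \<inter> topspace (tau_co X M d)))"
      using Cod_open_co by blast
    moreover have "Cod X M d \<subseteq> topspace (tau_co X M d)" using openin_subset[OF Cod_open_co] .
    ultimately show ?thesis unfolding N_def by (metis (no_types, lifting) Int_assoc Int_commute inf.absorb_iff2)
  qed
  have gN: "g \<in> N"
  proof -
    have "g \<in> co_sub X M d (C y) (mball (gg y) (\<delta>/3))" if y: "y \<in> G" for y
    proof -
      have "C y \<subseteq> dom g" using CK Kg by blast
      moreover have "gg x \<in> mball (gg y) (\<delta>/3)" if "x \<in> C y" for x
        using that dpos unfolding C_def by auto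
      ultimately show ?thesis unfolding co_sub_def gg_def using gC by auto
    qed
    then show ?thesis unfolding N_def using gC by auto
  qed
  have NB: "N \<subseteq> BK X M d K f \<epsilon>"
  proof
    fix h assume h: "h \<in> N"
    then have hC: "h \<in> Cod X M d" unfolding N_def by auto
    have hco: "\<And>y. y \<in> G \<Longrightarrow> h \<in> co_sub X M d (C y) (mball (gg y) (\<delta>/3))"
      using h unfolding N_def by auto
    have Kh: "K \<subseteq> dom h"
    proof
      fix x assume "x \<in> K"
      then obtain y where "y \<in> G" "x \<in> U y" using F G by auto
      then show "x \<in> dom h" using hco UC unfolding co_sub_def by blast
    qed
    have hne: "h \<noteq> Map.empty" using Kh Kne by auto
    have pt: "d (the (f x)) (the (h x)) \<le> dK d K f g + 7 * \<delta> / 12" if x: "x \<in> K" for x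
    proof -
      obtain y where y: "y \<in> G" "x \<in> U y" using F G x by auto
      have xC: "x \<in> C y" using y UC by blast
      have h1: "the (h x) \<in> mball (gg y) (\<delta>/3)" using hco[OF y(1)] xC unfolding co_sub_def by auto
      have h2: "gg x \<in> mball (gg y) (\<delta>/4)" using y(2) unfolding U_def by auto
      have fxM: "the (f x) \<in> M" using Cod_in_M[OF fC] x Kf by blast
      have "d (gg x) (the (h x)) \<le> d (gg x) (gg y) + d (gg y) (the (h x))"
        using h1 h2 by (intro triangle) auto
      also have "\<dots> < \<delta>/4 + \<delta>/3" using h1 h2 by (auto simp: commute)
      finally have a: "d (gg x) (the (h x)) < \<delta>/4 + \<delta>/3" .
      have b: "d (the (f x)) (gg x) \<le> dK d K f g"
        using dK_ge[OF fC gC K Kf Kg x] unfolding gg_def .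
      have "d (the (f x)) (the (h x)) \<le> d (the (f x)) (gg x) + d (gg x) (the (h x))"
        using h1 h2 fxM by (intro triangle) auto
      then show ?thesis using a b by simp
    qed
    have "dK d K f h \<le> dK d K f g + 7 * \<delta> / 12"
      unfolding dK_def[of d K f h] using Kne pt by (intro cSUP_least) auto
    also have "\<dots> < \<epsilon>" using dpos \<delta>_def by linarith
    finally have "dK d K f h < \<epsilon>" .
    then show "h \<in> BK X M d K f \<epsilon>" unfolding BK_def Cod_star_def using hC Kh hne by auto
  qed
  show "\<exists>T. openin (tau_co X M d) T \<and> g \<in> T \<and> T \<subseteq> BK X M d K f \<epsilon>"
    using Nop gN NB by blast
qed

end

theorem mainTheorem5:
  fixes X :: "'a topology" and M :: "'b set" and d :: "'b \<Rightarrow> 'b \<Rightarrow> real"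
  assumes "locally_compact_space X" and "Hausdorff_space X" and "second_countable X"
    and "Metric_space M d"
  shows "tau_co X M d = tau_cc X M d"
proof -
  interpret Metric_space M d by (rule assms(4))
  have A: "generate_topology_on
     (insert (Cod X M d)
       {BK X M d K f \<epsilon> | K f \<epsilon>. f \<in> Cod_star X M d \<and> compactin X K \<and> K \<noteq> {} \<and>
                              K \<subseteq> dom f \<and> \<epsilon> > 0}) s" if "openin (tau_co X M d) s" for s
  proof -
    have "generate_topology_on {co_sub X M d K V | K V. compactin X K \<and> openin mtopology V} s"
      using that unfolding tau_co_def by (rule openin_topology_generated_by)
    then show ?thesis
      by (rule generate_topology_on_coarsest[OF istopology_generate_topology_on, rotated])
        (use co_open_cc in \<open>auto simp: tau_cc_def openin_topology_generated_by_iff\<close>)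
  qed
  have B: "generate_topology_on {co_sub X M d K V | K V. compactin X K \<and> openin mtopology V} s"
    if "openin (tau_cc X M d) s" for s
  proof -
    have "generate_topology_on (insert (Cod X M d)
       {BK X M d K f \<epsilon> | K f \<epsilon>. f \<in> Cod_star X M d \<and> compactin X K \<and> K \<noteq> {} \<and>
                              K \<subseteq> dom f \<and> \<epsilon> > 0}) s" (is "generate_topology_on ?S s")
      using that unfolding tau_cc_def by (rule openin_topology_generated_by)
    note gen = this
    have c1: "generate_topology_on {co_sub X M d K V | K V. compactin X K \<and> openin mtopology V} (Cod X M d)"
      using Cod_open_co unfolding tau_co_def openin_topology_generated_by_iff .
    have c2: "generate_topology_on {co_sub X M d K V | K V. compactin X K \<and> openin mtopology V} (BK X M d K f \<epsilon>)"
      if "f \<in> Cod_star X M d" "compactin X K" "K \<noteq> {}" "K \<subseteq> dom f" "\<epsilon> > 0" for f K \<epsilon>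
      using cc_open_co[OF that] unfolding tau_co_def openin_topology_generated_by_iff .
    show ?thesis
      by (rule generate_topology_on_coarsest[OF istopology_generate_topology_on _ gen]) (use c1 c2 in blast)
  qed
  show ?thesis unfolding topology_eq
    using A B by (auto simp: tau_co_def tau_cc_def openin_topology_generated_by_iff)
qed

end
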